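(* Let $p\in(0,1)$ be a constant, $G_n\sim G(n,p)$ on vertex set $[n]$, and fix an integer $v\geq 3$. Let $X=\left[\left\lfloor\frac{6}{p^2}\ln n\right\rfloor\right]$. Then with probability tending to $1$ as $n\to\infty$, for every two distinct vertices $x_1,x_2\in[n]$, the common neighbourhood $N_X(x_1,x_2)$ of $x_1,x_2$ inside $X$ contains a clique of size $v$.
   Context: $G(n,p)$ is the binomial random graph on $[n]=\{1,\ldots,n\}$. *)

theory Defs
  imports "HOL-Probability.Probability"
begin

definition edge_pairs :: "nat \<Rightarrow> (nat \<times> nat) set" where
  "edge_pairs n = {(i, j). 1 \<le> i \<and> i < j \<and> j \<le> n}"

text \<open>The binomial random graph G(n,p): each potential edge is present independently
  with probability p. A graph is its edge-indicator function on pairs (i,j), i<j.\<close>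
definition Gnp :: "nat \<Rightarrow> real \<Rightarrow> (nat \<times> nat \<Rightarrow> bool) pmf" where
  "Gnp n p = Pi_pmf (edge_pairs n) False (\<lambda>_. bernoulli_pmf p)"

definition adj :: "(nat \<times> nat \<Rightarrow> bool) \<Rightarrow> nat \<Rightarrow> nat \<Rightarrow> bool" where
  "adj G x y \<longleftrightarrow> (x < y \<and> G (x, y)) \<or> (y < x \<and> G (y, x))"

definition common_nbhd :: "(nat \<times> nat \<Rightarrow> bool) \<Rightarrow> nat set \<Rightarrow> nat \<Rightarrow> nat \<Rightarrow> nat set" where
  "common_nbhd G X x1 x2 = {y \<in> X. adj G x1 y \<and> adj G x2 y}"

definition is_clique :: "(nat \<times> nat \<Rightarrow> bool) \<Rightarrow> nat set \<Rightarrow> bool" where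
  "is_clique G K \<longleftrightarrow> (\<forall>a\<in>K. \<forall>b\<in>K. a \<noteq> b \<longrightarrow> adj G a b)"

end

theory Submission
  imports Defs "HOL-Real_Asymp.Real_Asymp"
begin

lemma emeasure_pair_pmf_sect:
  "emeasure (pair_pmf Q R) {x. P (fst x) (snd x)} = (\<integral>\<^sup>+ f. emeasure R {g. P f g} \<partial>Q)"
proof -
  have "emeasure R {g. P f g} = (\<integral>\<^sup>+ g. of_bool (P f g) \<partial>R)" for f
  proof -
    have "(\<integral>\<^sup>+ g. of_bool (P f g) \<partial>R) = (\<integral>\<^sup>+ g. indicator {g. P f g} g \<partial>R)"
      by (simp add: indicator_def)
    also have "\<dots> = emeasure R {g. P f g}"
      by (rule nn_integral_indicator) simp
    finally show ?thesis by simp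
  qed
  then show ?thesis unfolding pair_pmf_def
    by (simp add: indicator_def)
qed

lemma cond_bound:
  fixes I A :: "'i set" and Q :: "'i \<Rightarrow> 'v pmf" and \<phi> :: "('i \<Rightarrow> 'v) \<Rightarrow> 'r"
  assumes fin: "finite I" and AI: "A \<subseteq> I"
    and phi: "\<And>G G'. (\<And>e. e \<in> A \<Longrightarrow> G e = G' e) \<Longrightarrow> \<phi> G = \<phi> G'"
    and Fdep: "\<And>r G G'. (\<And>e. e \<in> I - A \<Longrightarrow> G e = G' e) \<Longrightarrow> (G \<in> F r \<longleftrightarrow> G' \<in> F r)"
    and bound: "\<And>r. measure_pmf.prob (Pi_pmf I d Q) (F r) \<le> \<psi> r"
    and nonneg: "\<And>r. \<psi> r \<ge> 0"
    and finQ: "\<And>x. finite (set_pmf (Q x))"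
  shows "measure_pmf.prob (Pi_pmf I d Q) {G. G \<in> F (\<phi> G)}
           \<le> measure_pmf.expectation (Pi_pmf I d Q) (\<lambda>G. \<psi> (\<phi> G))"
proof -
  define h :: "('i \<Rightarrow> 'v) \<times> ('i \<Rightarrow> 'v) \<Rightarrow> 'i \<Rightarrow> 'v" where
    "h = (\<lambda>(f,g) x. if x \<in> A then f x else g x)"
  define PA where "PA = Pi_pmf A d Q"
  define PB where "PB = Pi_pmf (I - A) d Q"
  have finA: "finite A" using fin AI finite_subset by blast
  have IU: "I = A \<union> (I - A)" using AI by blast
  have dec: "Pi_pmf I d Q = map_pmf h (pair_pmf PA PB)"
    unfolding h_def PA_def PB_def
    by (subst IU, rule Pi_pmf_union) (use fin finA in auto)
  have hA: "\<phi> (h (f, g)) = \<phi> f" for f g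
    by (rule phi) (simp add: h_def)
  have hB: "h (f, g) \<in> F r \<longleftrightarrow> g \<in> F r" for f g r
    by (rule Fdep) (simp add: h_def)
  have hB': "h x \<in> F r \<longleftrightarrow> snd x \<in> F r" for x r
    by (cases x) (simp add: hB)
  have hA': "\<phi> (h x) = \<phi> (fst x)" for x
    by (cases x) (simp add: hA)
  have Fr: "emeasure PB (F r) \<le> ennreal (\<psi> r)" for r
  proof -
    have "emeasure (Pi_pmf I d Q) (F r) = emeasure (pair_pmf PA PB) {x. snd x \<in> F r}"
      unfolding dec by (simp add: vimage_def hB')
    also have "\<dots> = emeasure PB (F r)"
      by (subst emeasure_pair_pmf_sect) (simp add: measure_pmf.emeasure_space_1[simplified])
    finally show ?thesis using bound[of r]
      by (metis ennreal_leI measure_pmf.emeasure_eq_measure)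
  qed
  have "emeasure (Pi_pmf I d Q) {G. G \<in> F (\<phi> G)} = emeasure (pair_pmf PA PB) {x. snd x \<in> F (\<phi> (fst x))}"
    unfolding dec by (simp add: vimage_def hB' hA')
  also have "\<dots> = (\<integral>\<^sup>+ f. emeasure PB (F (\<phi> f)) \<partial>PA)"
    by (subst emeasure_pair_pmf_sect) simp
  also have "\<dots> \<le> (\<integral>\<^sup>+ f. ennreal (\<psi> (\<phi> f)) \<partial>PA)"
    by (intro nn_integral_mono Fr)
  also have "\<dots> = (\<integral>\<^sup>+ x. ennreal (\<psi> (\<phi> (fst x))) \<partial>pair_pmf PA PB)"
    unfolding pair_pmf_def by (simp add: measure_pmf.emeasure_space_1[simplified])
  also have "\<dots> = (\<integral>\<^sup>+ G. ennreal (\<psi> (\<phi> G)) \<partial>Pi_pmf I d Q)"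
    unfolding dec by (simp add: hA')
  also have "\<dots> = ennreal (measure_pmf.expectation (Pi_pmf I d Q) (\<lambda>G. \<psi> (\<phi> G)))"
  proof (rule nn_integral_eq_integral)
    have "finite (set_pmf (Pi_pmf I d Q))"
      by (rule finite_subset[OF set_Pi_pmf_subset'[OF fin]]) (use fin finQ in auto)
    then show "integrable (measure_pmf (Pi_pmf I d Q)) (\<lambda>G. \<psi> (\<phi> G))"
      by (rule integrable_measure_pmf_finite)
  qed (simp add: nonneg)
  finally have "ennreal (measure_pmf.prob (Pi_pmf I d Q) {G. G \<in> F (\<phi> G)})
     \<le> ennreal (measure_pmf.expectation (Pi_pmf I d Q) (\<lambda>G. \<psi> (\<phi> G)))"
    by (simp add: measure_pmf.emeasure_eq_measure)
  moreover have "0 \<le> measure_pmf.expectation (Pi_pmf I d Q) (\<lambda>G. \<psi> (\<phi> G))"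
    by (intro Bochner_Integration.integral_nonneg nonneg)
  ultimately show ?thesis by (simp add: ennreal_le_iff)
qed

lemma fin_Pi_bern: "finite I \<Longrightarrow> finite (set_pmf (Pi_pmf I False (\<lambda>_. bernoulli_pmf p)))"
  by (rule finite_subset[OF set_Pi_pmf_subset']) auto

lemma markov_pmf:
  assumes "finite (set_pmf M)" and "\<And>x. x \<in> set_pmf M \<Longrightarrow> indicator S x \<le> (h x::real)"
  shows "measure_pmf.prob M S \<le> measure_pmf.expectation M h"
proof -
  have "measure_pmf.prob M S = measure_pmf.expectation M (indicator S)"
    by simp
  also have "\<dots> \<le> measure_pmf.expectation M h"
    by (intro integral_mono_AE integrable_measure_pmf_finite assms AE_pmfI) auto
  finally show ?thesis .
qed

lemma prod_exp:
  assumes fin: "finite I" and DI: "D \<subseteq> I" and p: "0 \<le> p" "p \<le> 1"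
    and g: "\<And>b. g b \<ge> (0::real)"
  shows "measure_pmf.expectation (Pi_pmf I False (\<lambda>_. bernoulli_pmf p)) (\<lambda>G. \<Prod>e\<in>D. g (G e))
     = (g True * p + g False * (1 - p)) ^ card D"
proof -
  have eq: "(\<Prod>e\<in>D. g (G e)) = (\<Prod>e\<in>I. (\<lambda>e b. if e \<in> D then g b else 1) e (G e))" for G
  proof -
    have "(\<Prod>e\<in>I. (\<lambda>e b. if e \<in> D then g b else 1) e (G e)) = (\<Prod>e\<in>I \<inter> D. g (G e))"
      by (simp add: prod.inter_filter[OF fin, symmetric] Int_def)
    also have "I \<inter> D = D" using DI by blast
    finally show ?thesis by simp
  qed
  have "measure_pmf.expectation (Pi_pmf I False (\<lambda>_. bernoulli_pmf p)) (\<lambda>G. \<Prod>e\<in>D. g (G e))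
     = (\<Prod>e\<in>I. measure_pmf.expectation (bernoulli_pmf p) (\<lambda>b. if e \<in> D then g b else 1))"
    unfolding eq
    by (rule expectation_prod_Pi_pmf) (use fin g in \<open>auto intro: integrable_measure_pmf_finite\<close>)
  also have "\<dots> = (\<Prod>e\<in>I. if e \<in> D then (g True * p + g False * (1 - p)) else 1)"
    by (intro prod.cong refl) (use p in \<open>simp add: integral_bernoulli_pmf\<close>)
  also have "\<dots> = (g True * p + g False * (1 - p)) ^ card D"
  proof -
    have "{x \<in> I. x \<in> D} = D" using DI by blast
    then show ?thesis by (simp add: prod.inter_filter[OF fin, symmetric])
  qed
  finally show ?thesis .
qed

lemma tail_bound:
  assumes fin: "finite I" and DI: "D \<subseteq> I" and p: "0 \<le> p" "p \<le> 1"
  shows "measure_pmf.prob (Pi_pmf I False (\<lambda>_. bernoulli_pmf p)) {G. card {e\<in>D. G e} < t}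
     \<le> 2 ^ t * (1 - p / 2) ^ card D"
proof -
  let ?M = "Pi_pmf I False (\<lambda>_. bernoulli_pmf p)"
  have finD: "finite D" using fin DI finite_subset by blast
  have pe: "(\<Prod>e\<in>D. (if G e then 1/2 else 1::real)) = (1/2) ^ card {e\<in>D. G e}" for G
    using finD by (simp add: prod.If_cases Int_def conj_commute)
  have "measure_pmf.prob ?M {G. card {e\<in>D. G e} < t}
      \<le> measure_pmf.expectation ?M (\<lambda>G. 2 ^ t * (\<Prod>e\<in>D. (if G e then 1/2 else 1::real)))"
  proof (rule markov_pmf[OF fin_Pi_bern[OF fin]])
    fix G
    show "indicator {G. card {e\<in>D. G e} < t} G \<le> 2 ^ t * (\<Prod>e\<in>D. (if G e then 1/2 else 1::real))"
    proof (cases "card {e\<in>D. G e} < t")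
      case True
      have "(2::real) ^ card {e\<in>D. G e} \<le> 2 ^ t"
        using True by (intro power_increasing) auto
      then have "1 \<le> (2::real) ^ t * (1/2) ^ card {e\<in>D. G e}"
        by (simp add: power_one_over field_simps)
      then show ?thesis using True by (simp add: pe)
    next
      case False
      then show ?thesis by (simp add: prod_nonneg)
    qed
  qed
  also have "\<dots> = 2 ^ t * measure_pmf.expectation ?M (\<lambda>G. (\<Prod>e\<in>D. (if G e then 1/2 else 1::real)))"
    by simp
  also have "\<dots> = 2 ^ t * (1 - p / 2) ^ card D"
    by (subst prod_exp[OF fin DI p]) (auto simp: algebra_simps)
  finally show ?thesis .
qed

definition ed :: "nat \<Rightarrow> nat \<Rightarrow> nat \<times> nat" where
  "ed x y = (min x y, max x y)"

definition noclq :: "(nat \<times> nat \<Rightarrow> bool) \<Rightarrow> nat set \<Rightarrow> nat \<Rightarrow> bool" where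
  "noclq G R v \<longleftrightarrow> \<not> (\<exists>K\<subseteq>R. card K = v \<and> is_clique G K)"

lemma adj_sym: "adj G x y = adj G y x"
  unfolding adj_def by auto

lemma adj_ed: "adj G x y \<longleftrightarrow> x \<noteq> y \<and> G (ed x y)"
  unfolding adj_def ed_def by (cases x y rule: linorder_cases) (auto simp: min_def max_def)

lemma ed_sym: "ed x y = ed y x"
  unfolding ed_def by auto

lemma ed_in: "x \<in> {1..n} \<Longrightarrow> y \<in> {1..n} \<Longrightarrow> x \<noteq> y \<Longrightarrow> ed x y \<in> edge_pairs n"
  unfolding ed_def edge_pairs_def by (cases x y rule: linorder_cases) (auto simp: min_def max_def)

lemma ed_eq: "ed a b = ed c d \<Longrightarrow> (a = c \<and> b = d) \<or> (a = d \<and> b = c)"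
  unfolding ed_def by (auto simp: min_def max_def split: if_splits)

lemma fin_edges: "finite (edge_pairs n)"
proof -
  have "edge_pairs n \<subseteq> {1..n} \<times> {1..n}" unfolding edge_pairs_def by auto
  then show ?thesis by (rule finite_subset) auto
qed

lemma noclq_cong:
  assumes "\<And>a b. a \<in> R \<Longrightarrow> b \<in> R \<Longrightarrow> a \<noteq> b \<Longrightarrow> G (ed a b) = G' (ed a b)"
  shows "noclq G R v \<longleftrightarrow> noclq G' R v"
proof -
  have "is_clique G K \<longleftrightarrow> is_clique G' K" if "K \<subseteq> R" for K
    using that assms unfolding is_clique_def by (auto simp: adj_ed) (metis subsetD)+
  then show ?thesis unfolding noclq_def by blast
qed

lemma card_true_image:
  assumes "inj_on f W"
  shows "card {e \<in> f ` W. G e} = card {w \<in> W. G (f w)}"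
proof -
  have "{e \<in> f ` W. G e} = f ` {w \<in> W. G (f w)}" by auto
  then show ?thesis using assms by (simp add: card_image inj_on_subset)
qed

lemma clique_step_bound:
  fixes p :: real
  assumes p: "0 < p" "p < 1"
    and IH: "\<And>R. R \<subseteq> {1..n} \<Longrightarrow> card R = s \<Longrightarrow> measure_pmf.prob (Gnp n p) {G. noclq G R v} \<le> \<beta>"
    and S: "S \<subseteq> {1..n}" and S0: "S0 \<subseteq> S" and S1: "S1 = S - S0"
    and a: "card S0 = a" "a \<ge> 1" and b: "card S1 = b" and beta: "\<beta> \<ge> 0"
  shows "measure_pmf.prob (Gnp n p) {G. noclq G S (Suc v)} \<le> 2 ^ (a * s) * (1 - p/2) ^ (a * b) + \<beta>"
proof -
  let ?I = "edge_pairs n"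
  let ?M = "Gnp n p"
  have M: "?M = Pi_pmf ?I False (\<lambda>_. bernoulli_pmf p)" by (simp add: Gnp_def)
  have finS: "finite S" using S finite_subset by blast
  have finS0: "finite S0" "finite S1" using finS S0 S1 finite_subset by auto
  define Nu where "Nu G u = {w \<in> S1. adj G u w}" for G u
  define Ea where "Ea = {G. \<forall>u\<in>S0. card (Nu G u) < s}"
  define D where "D = (\<lambda>(u,w). ed u w) ` (S0 \<times> S1)"
  define \<phi> where "\<phi> G = (SOME R. \<exists>u\<in>S0. R \<subseteq> Nu G u \<and> card R = s)" for G
  define F where "F R = {G. R \<subseteq> S1 \<and> card R = s \<and> noclq G R v}" for R
  have dis: "S0 \<inter> S1 = {}" using S1 by auto
  have injD: "inj_on (\<lambda>(u,w). ed u w) (S0 \<times> S1)"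
    using dis by (auto simp: inj_on_def dest!: ed_eq)
  have cardD: "card D = a * b" unfolding D_def using injD a b by (simp add: card_image card_cartesian_product)
  have DI: "D \<subseteq> ?I" unfolding D_def using S S0 S1 dis by (force intro!: ed_in)
  have Ea_sub: "Ea \<subseteq> {G. card {e\<in>D. G e} < a * s}"
  proof
    fix G assume "G \<in> Ea"
    then have lt: "\<forall>u\<in>S0. card (Nu G u) < s" unfolding Ea_def by auto
    have "{e\<in>D. G e} = (\<lambda>(u,w). ed u w) ` (Sigma S0 (Nu G))"
      unfolding D_def Nu_def using dis by (auto simp: adj_ed) (force intro!: rev_image_eqI)
    then have "card {e\<in>D. G e} = card (Sigma S0 (Nu G))"
      using injD by (simp add: card_image inj_on_subset Nu_def subset_iff)
    also have "\<dots> = (\<Sum>u\<in>S0. card (Nu G u))"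
      using finS0 by (subst card_SigmaI) (auto simp: Nu_def)
    also have "\<dots> < (\<Sum>u\<in>S0. s)"
      using lt finS0 a by (intro sum_strict_mono) auto
    also have "\<dots> = a * s" using a by simp
    finally show "G \<in> {G. card {e\<in>D. G e} < a * s}" by simp
  qed
  have PEa: "measure_pmf.prob ?M Ea \<le> 2 ^ (a * s) * (1 - p/2) ^ (a * b)"
  proof -
    have "measure_pmf.prob ?M Ea \<le> measure_pmf.prob ?M {G. card {e\<in>D. G e} < a * s}"
      by (intro measure_pmf.finite_measure_mono Ea_sub) auto
    also have "\<dots> \<le> 2 ^ (a * s) * (1 - p/2) ^ card D"
      unfolding M by (rule tail_bound[OF fin_edges DI]) (use p in auto)
    finally show ?thesis by (simp add: cardD)
  qed
  have PEb: "measure_pmf.prob ?M {G. G \<in> F (\<phi> G)} \<le> \<beta>"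
  proof -
    have "measure_pmf.prob ?M {G. G \<in> F (\<phi> G)} \<le> measure_pmf.expectation ?M (\<lambda>G. (\<lambda>_. \<beta>) (\<phi> G))"
      unfolding M
    proof (rule cond_bound[OF fin_edges DI, where \<phi>=\<phi> and F=F and \<psi>="\<lambda>_. \<beta>"])
      fix G G' :: "nat \<times> nat \<Rightarrow> bool" assume ag: "\<And>e. e \<in> D \<Longrightarrow> G e = G' e"
      have "Nu G u = Nu G' u" if uS: "u \<in> S0" for u
      proof -
        have "G (ed u w) = G' (ed u w)" if wS: "w \<in> S1" for w
          using ag[of "ed u w"] uS wS unfolding D_def by blast
        then show ?thesis unfolding Nu_def by (auto simp: adj_ed)
      qed
      then have "(\<lambda>R. \<exists>u\<in>S0. R \<subseteq> Nu G u \<and> card R = s) = (\<lambda>R. \<exists>u\<in>S0. R \<subseteq> Nu G' u \<and> card R = s)"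
        by auto
      then show "\<phi> G = \<phi> G'" unfolding \<phi>_def by simp
    next
      fix R and G G' :: "nat \<times> nat \<Rightarrow> bool" assume ag: "\<And>e. e \<in> ?I - D \<Longrightarrow> G e = G' e"
      show "G \<in> F R \<longleftrightarrow> G' \<in> F R"
      proof (cases "R \<subseteq> S1")
        case True
        have "noclq G R v \<longleftrightarrow> noclq G' R v"
        proof (rule noclq_cong)
          fix x y assume xy: "x \<in> R" "y \<in> R" "x \<noteq> y"
          have "ed x y \<in> ?I" using xy True S S1 by (intro ed_in) auto
          moreover have "ed x y \<notin> D"
          proof
            assume "ed x y \<in> D"
            then obtain u w where "u \<in> S0" "w \<in> S1" "ed x y = ed u w" unfolding D_def by auto
            then show False using ed_eq[of x y u w] xy True dis by blast
          qed
          ultimately show "G (ed x y) = G' (ed x y)" using ag by blast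
        qed
        then show ?thesis unfolding F_def by simp
      next
        case False
        then show ?thesis unfolding F_def by simp
      qed
    next
      fix R
      show "measure_pmf.prob (Pi_pmf ?I False (\<lambda>_. bernoulli_pmf p)) (F R) \<le> \<beta>"
      proof (cases "R \<subseteq> S1 \<and> card R = s")
        case True
        have "measure_pmf.prob ?M (F R) \<le> measure_pmf.prob ?M {G. noclq G R v}"
          by (intro measure_pmf.finite_measure_mono) (auto simp: F_def)
        also have "\<dots> \<le> \<beta>" using True S S1 by (intro IH) auto
        finally show ?thesis unfolding M .
      next
        case False
        then have "F R = {}" unfolding F_def by auto
        then show ?thesis using beta by simp
      qed
    qed (use beta in auto)
    then show ?thesis by simp
  qed
  have cover: "{G. noclq G S (Suc v)} \<subseteq> Ea \<union> {G. G \<in> F (\<phi> G)}"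
  proof
    fix G assume bad: "G \<in> {G. noclq G S (Suc v)}"
    show "G \<in> Ea \<union> {G. G \<in> F (\<phi> G)}"
    proof (cases "G \<in> Ea")
      case False
      then obtain u where u: "u \<in> S0" "card (Nu G u) \<ge> s" unfolding Ea_def by auto
      have "finite (Nu G u)" using finS0 unfolding Nu_def by auto
      obtain R where R: "R \<subseteq> Nu G u" "card R = s"
        using obtain_subset_with_card_n[OF u(2)] by blast
      have ex: "\<exists>R. \<exists>u\<in>S0. R \<subseteq> Nu G u \<and> card R = s" using u(1) R by blast
      have "\<exists>u\<in>S0. \<phi> G \<subseteq> Nu G u \<and> card (\<phi> G) = s"
        unfolding \<phi>_def by (rule someI_ex[OF ex])
      then obtain u' where u': "u' \<in> S0" "\<phi> G \<subseteq> Nu G u'" "card (\<phi> G) = s"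
        by blast
      have R1: "\<phi> G \<subseteq> S1" using u' unfolding Nu_def by auto
      have "noclq G (\<phi> G) v"
        unfolding noclq_def
      proof
        assume "\<exists>K\<subseteq>\<phi> G. card K = v \<and> is_clique G K"
        then obtain K where K: "K \<subseteq> \<phi> G" "card K = v" "is_clique G K" by blast
        have finK: "finite K" using finite_subset[OF K(1)] finite_subset[OF R1] finS0(2) by blast
        have uK: "u' \<notin> K"
        proof
          assume "u' \<in> K"
          then have "u' \<in> S1" using K(1) R1 by (meson subsetD)
          then show False using u'(1) dis by (meson disjoint_iff)
        qed
        have KS: "K \<subseteq> S" using K(1) R1 S1 by (meson Diff_subset subset_trans)
        have "insert u' K \<subseteq> S" using KS u'(1) S0 by (meson insert_subset subsetD)
        moreover have "card (insert u' K) = Suc v" using finK uK K(2) by simp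
        moreover have "is_clique G (insert u' K)"
          unfolding is_clique_def
        proof (intro ballI impI)
          fix x y assume xy: "x \<in> insert u' K" "y \<in> insert u' K" "x \<noteq> y"
          have adjK: "adj G u' z" if "z \<in> K" for z
          proof -
            have "z \<in> Nu G u'" using that K(1) u'(2) by (meson subsetD)
            then show ?thesis unfolding Nu_def by simp
          qed
          show "adj G x y"
          proof (cases "x = u'")
            case True
            then have "y \<in> K" using xy by simp
            then show ?thesis using True adjK by simp
          next
            case xn: False
            then have xK: "x \<in> K" using xy by simp
            show ?thesis
            proof (cases "y = u'")
              case True
              then show ?thesis using xK adjK adj_sym by metis
            next
              case False
              then have "y \<in> K" using xy by simp
              then show ?thesis using xK K(3) xy(3) unfolding is_clique_def by simp
            qed
          qed
        qed
        ultimately have "\<exists>K\<subseteq>S. card K = Suc v \<and> is_clique G K" by blast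
        then show False using bad unfolding noclq_def by blast
      qed
      then have "G \<in> F (\<phi> G)" unfolding F_def using R1 u'(3) by simp
      then show ?thesis by simp
    next
      case True
      then show ?thesis by (rule UnI1)
    qed
  qed
  have "measure_pmf.prob ?M {G. noclq G S (Suc v)} \<le> measure_pmf.prob ?M (Ea \<union> {G. G \<in> F (\<phi> G)})"
    by (intro measure_pmf.finite_measure_mono cover) auto
  also have "\<dots> \<le> measure_pmf.prob ?M Ea + measure_pmf.prob ?M {G. G \<in> F (\<phi> G)}"
    by (rule measure_Un_le) auto
  finally show ?thesis using PEa PEb by linarith
qed

lemma noclq_0: "\<not> noclq G S 0"
  unfolding noclq_def is_clique_def by (intro notI) (metis card.empty empty_iff empty_subsetI)

lemma clique_decay:
  fixes p :: real
  assumes p: "0 < p" "p < 1"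
  shows "\<forall>C>0. \<exists>K0. \<forall>k\<ge>K0. \<forall>n S. S \<subseteq> {1..n} \<longrightarrow> card S = k \<longrightarrow>
           measure_pmf.prob (Gnp n p) {G. noclq G S v} \<le> exp (- C * real k)"
proof (induction v)
  case 0
  then show ?case by (auto simp: noclq_0)
next
  case (Suc v)
  show ?case
  proof (intro allI impI)
    fix C :: real assume C: "C > 0"
    define c where "c = - ln (1 - p/2)"
    have c: "c > 0" unfolding c_def using p by simp
    have ec: "1 - p/2 = exp (- c)" unfolding c_def using p by simp
    define \<epsilon> where "\<epsilon> = c / (2 * ln 2)"
    have eps: "\<epsilon> > 0" unfolding \<epsilon>_def using c by simp
    define C' where "C' = 4 * C / \<epsilon>"
    have C': "C' > 0" unfolding C'_def using C eps by simp
    obtain K1 where K1: "\<And>k n S. k \<ge> K1 \<Longrightarrow> S \<subseteq> {1..n} \<Longrightarrow> card S = k \<Longrightarrow>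
           measure_pmf.prob (Gnp n p) {G. noclq G S v} \<le> exp (- C' * real k)"
      using Suc.IH C' by blast
    define T where "T = max (max (2 * (real K1 + 1) / \<epsilon>) ((C' + 1) / C)) (8 * (C + 1) / c + 1)"
    define K0 where "K0 = nat \<lceil>T\<rceil> + 2"
    show "\<exists>K0. \<forall>k\<ge>K0. \<forall>n S. S \<subseteq> {1..n} \<longrightarrow> card S = k \<longrightarrow>
           measure_pmf.prob (Gnp n p) {G. noclq G S (Suc v)} \<le> exp (- C * real k)"
    proof (intro exI[of _ K0] allI impI)
      fix k n :: nat and S :: "nat set" assume k: "K0 \<le> k" and S: "S \<subseteq> {1..n}" and cS: "card S = k"
      have kT: "real k \<ge> T" and k2: "k \<ge> 2" using k unfolding K0_def by linarith+
      have finS: "finite S" using S finite_subset by blast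
      define a where "a = k div 2"
      define b where "b = k - a"
      obtain S0 where S0: "S0 \<subseteq> S" "card S0 = a"
        using obtain_subset_with_card_n[of a S] cS unfolding a_def by auto
      have cS1: "card (S - S0) = b" using S0 finS cS unfolding b_def by (simp add: card_Diff_subset finite_subset)
      have a1: "a \<ge> 1" using k2 unfolding a_def by simp
      have "k \<le> 2 * a + 1" unfolding a_def by presburger
      then have "real k \<le> real (2 * a + 1)" by (simp only: of_nat_le_iff)
      then have ra: "real a \<ge> (real k - 1) / 2" by simp
      have "2 * a \<le> k" unfolding a_def by presburger
      then have "real (2 * a) \<le> real k" by (simp only: of_nat_le_iff)
      moreover have "real b = real k - real a" unfolding b_def a_def by (simp add: of_nat_diff)
      ultimately have rb: "real b \<ge> real k / 2" by simp
      define s where "s = nat \<lfloor>\<epsilon> * real b\<rfloor>"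
      have s_le: "real s \<le> \<epsilon> * real b" unfolding s_def using eps by simp
      have s_ge: "real s \<ge> \<epsilon> * real b - 1" unfolding s_def by linarith
      have s_ge2: "real s \<ge> \<epsilon> * real k / 2 - 1"
      proof -
        have "\<epsilon> * (real k / 2) \<le> \<epsilon> * real b" using rb eps by (intro mult_left_mono) auto
        then show ?thesis using s_ge by simp
      qed
      have "2 * (real K1 + 1) / \<epsilon> \<le> real k" using kT unfolding T_def by linarith
      then have "real K1 + 1 \<le> \<epsilon> * real k / 2" using eps by (simp add: field_simps)
      then have sK1: "s \<ge> K1" using s_ge2 by linarith
      have IHs: "measure_pmf.prob (Gnp n p) {G. noclq G R v} \<le> exp (- C' * real s)"
        if "R \<subseteq> {1..n}" "card R = s" for R
        using K1[OF sK1 that] .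
      have main: "measure_pmf.prob (Gnp n p) {G. noclq G S (Suc v)}
          \<le> 2 ^ (a * s) * (1 - p/2) ^ (a * b) + exp (- C' * real s)"
        by (rule clique_step_bound[OF p IHs S S0(1) refl S0(2) a1 cS1]) simp_all
      have "2 ^ (a * s) * (1 - p/2) ^ (a * b) = exp (real a * real s * ln 2 - c * real a * real b)"
      proof -
        have e1: "exp (real (a * s) * ln 2) = exp (ln 2) ^ (a * s)" by (rule exp_of_nat_mult)
        have "(2::real) ^ (a * s) = exp (real (a * s) * ln 2)" unfolding e1 by simp
        moreover have e2: "exp (real (a * b) * (- c)) = exp (- c) ^ (a * b)" by (rule exp_of_nat_mult)
        have "(1 - p/2) ^ (a * b) = exp (real (a * b) * (- c))" unfolding e2 ec ..
        ultimately show ?thesis by (simp add: exp_add[symmetric] algebra_simps)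
      qed
      also have "\<dots> \<le> exp (- c * real a * real b / 2)"
      proof -
        have "real s * ln 2 \<le> c * real b / 2"
          using s_le unfolding \<epsilon>_def by (simp add: field_simps)
        then have "real a * (real s * ln 2) \<le> real a * (c * real b / 2)"
          by (intro mult_left_mono) auto
        then show ?thesis by (simp add: algebra_simps)
      qed
      also have "\<dots> \<le> exp (- c * ((real k - 1) / 2) * (real k / 2) / 2)"
      proof -
        have "((real k - 1) / 2) * (real k / 2) \<le> real a * real b"
          using ra rb k2 by (intro mult_mono) auto
        then have h: "c * (((real k - 1) / 2) * (real k / 2)) \<le> c * (real a * real b)"
          using c by (intro mult_left_mono) auto
        have "- c * real a * real b / 2 \<le> - c * ((real k - 1) / 2) * (real k / 2) / 2"
          using h by (simp add: algebra_simps)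
        then show ?thesis by simp
      qed
      also have "\<dots> \<le> exp (- C * real k - 1)"
      proof -
        have "8 * (C + 1) / c + 1 \<le> real k" using kT unfolding T_def by linarith
        then have "8 * (C + 1) \<le> c * (real k - 1)" using c by (simp add: field_simps)
        then have "8 * (C + 1) * real k \<le> c * (real k - 1) * real k"
          by (intro mult_right_mono) auto
        then have X: "8 * ((C + 1) * real k) \<le> c * (real k - 1) * real k" by (simp only: mult.assoc)
        have Y: "C * real k + 1 \<le> (C + 1) * real k" using k2 by (simp add: algebra_simps)
        have Z: "c * ((real k - 1) / 2) * (real k / 2) / 2 = (c * (real k - 1) * real k) / 8" by simp
        have "C * real k + 1 \<le> c * ((real k - 1) / 2) * (real k / 2) / 2"
          unfolding Z using X Y by linarith
        then show ?thesis by simp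
      qed
      finally have t1: "2 ^ (a * s) * (1 - p/2) ^ (a * b) \<le> exp (- C * real k - 1)" .
      have t2: "exp (- C' * real s) \<le> exp (- C * real k - 1)"
      proof -
        have "C' * (\<epsilon> * real k / 2 - 1) \<le> C' * real s" using s_ge2 C' by (intro mult_left_mono) auto
        moreover have "C' * (\<epsilon> * real k / 2 - 1) = 2 * C * real k - C'" unfolding C'_def using eps by (simp add: field_simps)
        ultimately have h1: "2 * C * real k - C' \<le> C' * real s" by linarith
        have "(C' + 1) / C \<le> real k" using kT unfolding T_def by linarith
        then have "C' + 1 \<le> C * real k" using C by (simp add: field_simps)
        then have "- C' * real s \<le> - C * real k - 1" using h1 by linarith
        then show ?thesis by simp
      qed
      have e1: "exp (- C * real k - 1) \<le> exp (- C * real k) / 2"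
      proof -
        have "exp (- C * real k - 1) = exp (- C * real k) * exp (-1)" by (simp add: exp_diff exp_minus field_simps)
        moreover have "exp (-1::real) \<le> 1/2"
        proof -
          have "2 \<le> exp (1::real)" using exp_ge_add_one_self[of 1] by simp
          then show ?thesis by (simp add: exp_minus field_simps)
        qed
        ultimately show ?thesis by simp
      qed
      show "measure_pmf.prob (Gnp n p) {G. noclq G S (Suc v)} \<le> exp (- C * real k)"
        using main t1 t2 e1 by linarith
    qed
  qed
qed

lemma prod_if_pow: "finite D \<Longrightarrow> (\<Prod>e\<in>D. (if G e then q else 1::real)) = q ^ card {e\<in>D. G e}"
  by (simp add: prod.If_cases Int_def conj_commute)

lemma pair_bound:
  fixes p :: real
  assumes p: "0 < p" "p < 1"
    and x: "x1 \<in> {1..n}" "x2 \<in> {1..n}" "x1 \<noteq> x2" and mn: "m \<le> n"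
    and Y: "Y = {1..m} - {x1, x2}"
    and CL: "\<And>R. R \<subseteq> {1..n} \<Longrightarrow> card R = k \<Longrightarrow> measure_pmf.prob (Gnp n p) {G. noclq G R v} \<le> \<beta>"
    and beta: "\<beta> \<ge> 0"
  shows "measure_pmf.prob (Gnp n p)
     {G. \<not> (\<exists>K. K \<subseteq> common_nbhd G {1..m} x1 x2 \<and> card K = v \<and> is_clique G K)}
      \<le> 2 ^ k * (1 - p^2/2) ^ card Y + \<beta>"
proof -
  let ?I = "edge_pairs n"
  let ?M = "Gnp n p"
  have M: "?M = Pi_pmf ?I False (\<lambda>_. bernoulli_pmf p)" by (simp add: Gnp_def)
  have finY: "finite Y" using Y by simp
  have Yn: "Y \<subseteq> {1..n}" using Y mn by auto
  have x1Y: "x1 \<notin> Y" and x2Y: "x2 \<notin> Y" using Y by auto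
  define N where "N G = {y\<in>Y. adj G x1 y \<and> adj G x2 y}" for G
  have N: "common_nbhd G {1..m} x1 x2 = N G" for G
    unfolding common_nbhd_def N_def Y by (auto simp: adj_ed)
  have ed_in1: "ed x y \<in> ?I" if "x \<in> {x1, x2}" "y \<in> Y" for x y
    using that x Yn x1Y x2Y by (intro ed_in) auto
  define D12 where "D12 = ed x1 ` Y \<union> ed x2 ` Y"
  define \<phi> where "\<phi> G = (SOME R. R \<subseteq> N G \<and> card R = k)" for G
  define F where "F R = {G. R \<subseteq> Y \<and> card R = k \<and> noclq G R v}" for R
  have D12I: "D12 \<subseteq> ?I" unfolding D12_def using ed_in1 by auto
  have PM: "measure_pmf.prob ?M {G. G \<in> F (\<phi> G)} \<le> \<beta>"
  proof -
    have "measure_pmf.prob ?M {G. G \<in> F (\<phi> G)} \<le> measure_pmf.expectation ?M (\<lambda>G. (\<lambda>_. \<beta>) (\<phi> G))"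
      unfolding M
    proof (rule cond_bound[OF fin_edges D12I, where \<phi>=\<phi> and F=F and \<psi>="\<lambda>_. \<beta>"])
      fix G G' :: "nat \<times> nat \<Rightarrow> bool" assume ag: "\<And>e. e \<in> D12 \<Longrightarrow> G e = G' e"
      have "G (ed x y) = G' (ed x y)" if "x \<in> {x1, x2}" "y \<in> Y" for x y
        using ag[of "ed x y"] that unfolding D12_def by blast
      then have "N G = N G'" unfolding N_def by (auto simp: adj_ed)
      then show "\<phi> G = \<phi> G'" unfolding \<phi>_def by simp
    next
      fix R and G G' :: "nat \<times> nat \<Rightarrow> bool" assume ag: "\<And>e. e \<in> ?I - D12 \<Longrightarrow> G e = G' e"
      show "G \<in> F R \<longleftrightarrow> G' \<in> F R"
      proof (cases "R \<subseteq> Y")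
        case True
        have "noclq G R v \<longleftrightarrow> noclq G' R v"
        proof (rule noclq_cong)
          fix a b assume ab: "a \<in> R" "b \<in> R" "a \<noteq> b"
          have "ed a b \<in> ?I" using ab True Yn by (intro ed_in) auto
          moreover have "ed a b \<notin> D12"
          proof
            assume "ed a b \<in> D12"
            then obtain x y where "x \<in> {x1, x2}" "y \<in> Y" "ed a b = ed x y" unfolding D12_def by auto
            then show False using ed_eq[of a b x y] ab True x1Y x2Y by blast
          qed
          ultimately show "G (ed a b) = G' (ed a b)" using ag by blast
        qed
        then show ?thesis unfolding F_def by simp
      next
        case False
        then show ?thesis unfolding F_def by simp
      qed
    next
      fix R
      show "measure_pmf.prob (Pi_pmf ?I False (\<lambda>_. bernoulli_pmf p)) (F R) \<le> \<beta>"
      proof (cases "R \<subseteq> Y \<and> card R = k")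
        case True
        have "measure_pmf.prob ?M (F R) \<le> measure_pmf.prob ?M {G. noclq G R v}"
          by (intro measure_pmf.finite_measure_mono) (auto simp: F_def)
        also have "\<dots> \<le> \<beta>" using True Yn by (intro CL) auto
        finally show ?thesis unfolding M .
      next
        case False
        then have "F R = {}" unfolding F_def by auto
        then show ?thesis using beta by simp
      qed
    qed (use beta in auto)
    then show ?thesis by simp
  qed
  define D1 where "D1 = ed x1 ` Y"
  define \<phi>1 where "\<phi>1 G = {y\<in>Y. adj G x1 y}" for G
  define F1 where "F1 R = {G. card {y \<in> R \<inter> Y. adj G x2 y} < k}" for R
  define \<psi> where "\<psi> R = 2 ^ k * (1 - p/2) ^ card (R \<inter> Y)" for R
  have D1I: "D1 \<subseteq> ?I" unfolding D1_def using ed_in1 by auto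
  have inj1: "inj_on (ed x) Y" if "x \<in> {x1, x2}" for x
    using that x1Y x2Y by (auto simp: inj_on_def dest!: ed_eq)
  have PL: "measure_pmf.prob ?M {G. G \<in> F1 (\<phi>1 G)} \<le> 2 ^ k * (1 - p^2/2) ^ card Y"
  proof -
    have "measure_pmf.prob ?M {G. G \<in> F1 (\<phi>1 G)} \<le> measure_pmf.expectation ?M (\<lambda>G. \<psi> (\<phi>1 G))"
      unfolding M
    proof (rule cond_bound[OF fin_edges D1I, where \<phi>=\<phi>1 and F=F1 and \<psi>=\<psi>])
      fix G G' :: "nat \<times> nat \<Rightarrow> bool" assume ag: "\<And>e. e \<in> D1 \<Longrightarrow> G e = G' e"
      have "G (ed x1 y) = G' (ed x1 y)" if "y \<in> Y" for y
        using ag[of "ed x1 y"] that unfolding D1_def by blast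
      then show "\<phi>1 G = \<phi>1 G'" unfolding \<phi>1_def by (auto simp: adj_ed)
    next
      fix R and G G' :: "nat \<times> nat \<Rightarrow> bool" assume ag: "\<And>e. e \<in> ?I - D1 \<Longrightarrow> G e = G' e"
      have "G (ed x2 y) = G' (ed x2 y)" if "y \<in> Y" for y
      proof -
        have "ed x2 y \<in> ?I" using ed_in1 that by auto
        moreover have "ed x2 y \<notin> D1"
        proof
          assume "ed x2 y \<in> D1"
          then obtain y' where "y' \<in> Y" "ed x2 y = ed x1 y'" unfolding D1_def by auto
          then show False using ed_eq[of x2 y x1 y'] that x(3) x2Y by blast
        qed
        ultimately show ?thesis using ag by blast
      qed
      then have "{y \<in> R \<inter> Y. adj G x2 y} = {y \<in> R \<inter> Y. adj G' x2 y}" by (auto simp: adj_ed)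
      then show "G \<in> F1 R \<longleftrightarrow> G' \<in> F1 R" unfolding F1_def by simp
    next
      fix R
      have inj: "inj_on (ed x2) (R \<inter> Y)" using inj1[of x2] by (auto intro: inj_on_subset)
      have DI: "ed x2 ` (R \<inter> Y) \<subseteq> ?I" using ed_in1 by auto
      have "F1 R = {G. card {e \<in> ed x2 ` (R \<inter> Y). G e} < k}"
      proof -
        have "card {e \<in> ed x2 ` (R \<inter> Y). G e} = card {y \<in> R \<inter> Y. adj G x2 y}" for G
        proof -
          have "card {e \<in> ed x2 ` (R \<inter> Y). G e} = card {y \<in> R \<inter> Y. G (ed x2 y)}"
            by (rule card_true_image[OF inj])
          also have "{y \<in> R \<inter> Y. G (ed x2 y)} = {y \<in> R \<inter> Y. adj G x2 y}"
            using x2Y by (auto simp: adj_ed)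
          finally show ?thesis .
        qed
        then show ?thesis unfolding F1_def by simp
      qed
      also have "measure_pmf.prob (Pi_pmf ?I False (\<lambda>_. bernoulli_pmf p)) \<dots>
          \<le> 2 ^ k * (1 - p / 2) ^ card (ed x2 ` (R \<inter> Y))"
        by (rule tail_bound[OF fin_edges DI]) (use p in auto)
      also have "card (ed x2 ` (R \<inter> Y)) = card (R \<inter> Y)" using inj by (rule card_image)
      finally show "measure_pmf.prob (Pi_pmf ?I False (\<lambda>_. bernoulli_pmf p)) (F1 R) \<le> \<psi> R"
        unfolding \<psi>_def .
    next
      fix R show "0 \<le> \<psi> R" unfolding \<psi>_def using p by simp
    qed simp
    also have "measure_pmf.expectation ?M (\<lambda>G. \<psi> (\<phi>1 G))
        = measure_pmf.expectation ?M (\<lambda>G. 2 ^ k * (\<Prod>e\<in>D1. (if G e then 1 - p/2 else 1)))"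
    proof -
      have "\<psi> (\<phi>1 G) = 2 ^ k * (\<Prod>e\<in>D1. (if G e then 1 - p/2 else 1))" for G
      proof -
        have "card {e \<in> D1. G e} = card {y \<in> Y. G (ed x1 y)}"
          unfolding D1_def by (rule card_true_image[OF inj1]) simp
        also have "{y \<in> Y. G (ed x1 y)} = \<phi>1 G \<inter> Y"
          unfolding \<phi>1_def using x1Y by (auto simp: adj_ed)
        finally have "card {e \<in> D1. G e} = card (\<phi>1 G \<inter> Y)" .
        moreover have "finite D1" unfolding D1_def using finY by simp
        ultimately show ?thesis unfolding \<psi>_def by (simp add: prod_if_pow)
      qed
      then show ?thesis by simp
    qed
    also have "\<dots> = 2 ^ k * ((1 - p/2) * p + 1 * (1 - p)) ^ card D1"
      unfolding M using prod_exp[OF fin_edges D1I, of p "\<lambda>b. if b then 1 - p/2 else 1"] p by simp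
    also have "card D1 = card Y" unfolding D1_def using inj1[of x1] by (simp add: card_image)
    also have "(1 - p/2) * p + 1 * (1 - p) = 1 - p^2/2" by (simp add: power2_eq_square algebra_simps)
    finally show ?thesis .
  qed
  have cover: "{G. \<not> (\<exists>K. K \<subseteq> common_nbhd G {1..m} x1 x2 \<and> card K = v \<and> is_clique G K)}
      \<subseteq> {G. G \<in> F1 (\<phi>1 G)} \<union> {G. G \<in> F (\<phi> G)}"
  proof
    fix G assume bad: "G \<in> {G. \<not> (\<exists>K. K \<subseteq> common_nbhd G {1..m} x1 x2 \<and> card K = v \<and> is_clique G K)}"
    have eqN: "{y \<in> \<phi>1 G \<inter> Y. adj G x2 y} = N G" unfolding \<phi>1_def N_def by auto
    show "G \<in> {G. G \<in> F1 (\<phi>1 G)} \<union> {G. G \<in> F (\<phi> G)}"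
    proof (cases "card (N G) < k")
      case True
      then have "G \<in> F1 (\<phi>1 G)" unfolding F1_def mem_Collect_eq eqN .
      then show ?thesis by simp
    next
      case False
      have "finite (N G)" unfolding N_def using finY by simp
      then obtain R where R: "R \<subseteq> N G" "card R = k"
        using obtain_subset_with_card_n[of k "N G"] False by auto
      have ex: "\<exists>R. R \<subseteq> N G \<and> card R = k" using R by blast
      have phi: "\<phi> G \<subseteq> N G \<and> card (\<phi> G) = k"
        unfolding \<phi>_def by (rule someI_ex[OF ex])
      have "\<phi> G \<subseteq> Y" using phi unfolding N_def by auto
      moreover have "noclq G (\<phi> G) v"
        unfolding noclq_def
      proof
        assume "\<exists>K\<subseteq>\<phi> G. card K = v \<and> is_clique G K"
        then obtain K where "K \<subseteq> \<phi> G" "card K = v" "is_clique G K" by blast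
        then have "K \<subseteq> common_nbhd G {1..m} x1 x2 \<and> card K = v \<and> is_clique G K"
          using phi unfolding N by blast
        then show False using bad by blast
      qed
      ultimately have "G \<in> F (\<phi> G)" unfolding F_def using phi by simp
      then show ?thesis by simp
    qed
  qed
  have "measure_pmf.prob ?M {G. \<not> (\<exists>K. K \<subseteq> common_nbhd G {1..m} x1 x2 \<and> card K = v \<and> is_clique G K)}
      \<le> measure_pmf.prob ?M ({G. G \<in> F1 (\<phi>1 G)} \<union> {G. G \<in> F (\<phi> G)})"
    by (intro measure_pmf.finite_measure_mono cover) auto
  also have "\<dots> \<le> measure_pmf.prob ?M {G. G \<in> F1 (\<phi>1 G)} + measure_pmf.prob ?M {G. G \<in> F (\<phi> G)}"
    by (rule measure_Un_le) auto
  finally show ?thesis using PL PM by linarith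
qed

lemma eventually_facts:
  fixes p :: real and K0 :: nat
  assumes p: "0 < p"
  shows "eventually (\<lambda>n::nat. nat \<lfloor>6 / p\<^sup>2 * ln (real n)\<rfloor> \<le> n \<and> K0 \<le> nat \<lfloor>ln (real n) / ln 4\<rfloor> \<and> n \<ge> 1) sequentially"
proof -
  have "(\<lambda>n::nat. ln (real n) / real n) \<longlonglongrightarrow> 0" by real_asymp
  then have ev1: "eventually (\<lambda>n::nat. ln (real n) / real n < p\<^sup>2 / 6) sequentially"
    using p by (intro order_tendstoD(2)) auto
  have "filterlim (\<lambda>n::nat. ln (real n) / ln 4) at_top sequentially" by real_asymp
  then have ev2: "eventually (\<lambda>n::nat. ln (real n) / ln 4 \<ge> real K0 + 1) sequentially"
    by (simp add: filterlim_at_top)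
  have ev3: "eventually (\<lambda>n::nat. n \<ge> 1) sequentially" by (rule eventually_ge_at_top)
  show ?thesis
  proof (rule eventually_mono[OF eventually_conj[OF ev1 eventually_conj[OF ev2 ev3]]], clarify)
    fix n :: nat assume h1: "ln (real n) / real n < p\<^sup>2 / 6" and h2: "real K0 + 1 \<le> ln (real n) / ln 4"
      and n1: "n \<ge> 1"
    have "6 / p\<^sup>2 * ln (real n) \<le> real n"
    proof -
      have "ln (real n) < p\<^sup>2 / 6 * real n" using h1 n1 by (simp add: field_simps)
      then show ?thesis using p by (simp add: field_simps)
    qed
    then have "\<lfloor>6 / p\<^sup>2 * ln (real n)\<rfloor> \<le> \<lfloor>real n\<rfloor>" by (rule floor_mono)
    then have "\<lfloor>6 / p\<^sup>2 * ln (real n)\<rfloor> \<le> int n" by simp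
    then have "nat \<lfloor>6 / p\<^sup>2 * ln (real n)\<rfloor> \<le> n" by (simp add: nat_le_iff)
    moreover have "K0 \<le> nat \<lfloor>ln (real n) / ln 4\<rfloor>" using h2 by linarith
    ultimately show "nat \<lfloor>6 / p\<^sup>2 * ln (real n)\<rfloor> \<le> n \<and> K0 \<le> nat \<lfloor>ln (real n) / ln 4\<rfloor> \<and> n \<ge> 1"
      using n1 by blast
  qed
qed

lemma U_tendsto:
  fixes \<alpha> \<beta> :: real
  shows "(\<lambda>n::nat. \<alpha> * (sqrt (real n) / real n) + \<beta> * (1 / real n ^ 2)) \<longlonglongrightarrow> 0"
proof -
  have "(\<lambda>n::nat. sqrt (real n) / real n) \<longlonglongrightarrow> 0" by real_asymp
  moreover have "(\<lambda>n::nat. 1 / real n ^ 2) \<longlonglongrightarrow> 0" by real_asymp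
  ultimately show ?thesis
    using tendsto_add[OF tendsto_mult_right_zero tendsto_mult_right_zero] by fastforce
qed

lemma analytic_bound:
  fixes p :: real and n :: nat
  assumes p: "0 < p" "p < 1" and n1: "n \<ge> 1"
  defines "m \<equiv> nat \<lfloor>6 / p\<^sup>2 * ln (real n)\<rfloor>" and "k \<equiv> nat \<lfloor>ln (real n) / ln 4\<rfloor>"
  shows "real n ^ 2 * (2 ^ k * (1 - p\<^sup>2/2) ^ (m - 2) + exp (- (8 * ln 2) * real k))
     \<le> exp (3 * p\<^sup>2 / 2) * (sqrt (real n) / real n) + exp (8 * ln 2) * (1 / real n ^ 2)"
proof -
  have n0: "real n > 0" using n1 by simp
  have lnn: "ln (real n) \<ge> 0" using n1 by simp
  have ln4: "ln (4::real) = 2 * ln 2"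
  proof -
    have "ln ((2::real) * 2) = ln 2 + ln 2" by (rule ln_mult_pos) auto
    then show ?thesis by simp
  qed
  have ln2: "ln (2::real) > 0" by simp
  have x0: "0 \<le> ln (real n) / ln 4" using lnn by simp
  then have kk: "real k = of_int \<lfloor>ln (real n) / ln 4\<rfloor>" unfolding k_def by simp
  have k_le: "real k \<le> ln (real n) / ln 4" unfolding kk by linarith
  have k_ge: "real k \<ge> ln (real n) / ln 4 - 1" unfolding kk by linarith
  have e1: "exp (real k * ln 2) = exp (ln 2) ^ k" by (rule exp_of_nat_mult)
  have "(2::real) ^ k = exp (real k * ln 2)" unfolding e1 by simp
  also have "\<dots> \<le> exp (ln (real n) / 2)"
  proof -
    have "real k * ln 2 \<le> ln (real n) / ln 4 * ln 2" using k_le ln2 by (intro mult_right_mono) auto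
    also have "\<dots> = ln (real n) / 2" unfolding ln4 using ln2 by simp
    finally show ?thesis by simp
  qed
  also have "\<dots> = sqrt (real n)"
    using n0 by (simp add: powr_half_sqrt[symmetric] powr_def)
  finally have t2k: "(2::real) ^ k \<le> sqrt (real n)" .
  have "0 \<le> 6 / p\<^sup>2 * ln (real n)" using lnn by simp
  then have mm: "real m = of_int \<lfloor>6 / p\<^sup>2 * ln (real n)\<rfloor>" unfolding m_def by simp
  have m_ge: "real m \<ge> 6 / p\<^sup>2 * ln (real n) - 1" unfolding mm by linarith
  have m2: "real (m - 2) \<ge> 6 / p\<^sup>2 * ln (real n) - 3" using m_ge by linarith
  have "p\<^sup>2 \<le> 1" using p by (simp add: power_le_one)
  then have b0: "0 \<le> 1 - p\<^sup>2/2" by simp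
  have "(1 - p\<^sup>2/2) ^ (m - 2) \<le> exp (- (p\<^sup>2/2)) ^ (m - 2)"
    using b0 exp_ge_add_one_self[of "- (p\<^sup>2/2)"] by (intro power_mono) auto
  also have "\<dots> = exp (real (m - 2) * (- (p\<^sup>2/2)))" by (rule exp_of_nat_mult[symmetric])
  also have "\<dots> \<le> exp (3 * p\<^sup>2 / 2 - 3 * ln (real n))"
  proof -
    have "(p\<^sup>2/2) * (6 / p\<^sup>2 * ln (real n) - 3) \<le> (p\<^sup>2/2) * real (m - 2)"
      using m2 p by (intro mult_left_mono) auto
    moreover have "(p\<^sup>2/2) * (6 / p\<^sup>2 * ln (real n) - 3) = 3 * ln (real n) - 3 * p\<^sup>2 / 2"
      using p by (simp add: field_simps)
    ultimately show ?thesis by (simp add: algebra_simps)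
  qed
  also have "\<dots> = exp (3 * p\<^sup>2 / 2) / real n ^ 3"
  proof -
    have "exp (real 3 * ln (real n)) = exp (ln (real n)) ^ 3" by (rule exp_of_nat_mult)
    then have "exp (3 * ln (real n)) = real n ^ 3" using n0 by simp
    then show ?thesis by (simp add: exp_diff)
  qed
  finally have tpow: "(1 - p\<^sup>2/2) ^ (m - 2) \<le> exp (3 * p\<^sup>2 / 2) / real n ^ 3" .
  have "exp (- (8 * ln 2) * real k) \<le> exp (8 * ln 2 - 4 * ln (real n))"
  proof -
    have "(8 * ln 2) * (ln (real n) / ln 4 - 1) \<le> (8 * ln 2) * real k"
      using k_ge ln2 by (intro mult_left_mono) auto
    moreover have "(8 * ln 2) * (ln (real n) / ln 4 - 1) = 4 * ln (real n) - 8 * ln 2"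
      unfolding ln4 using ln2 by (simp add: field_simps)
    ultimately show ?thesis by simp
  qed
  also have "\<dots> = exp (8 * ln 2) / real n ^ 4"
  proof -
    have "exp (real 4 * ln (real n)) = exp (ln (real n)) ^ 4" by (rule exp_of_nat_mult)
    then have "exp (4 * ln (real n)) = real n ^ 4" using n0 by simp
    then show ?thesis by (simp add: exp_diff)
  qed
  finally have texp: "exp (- (8 * ln 2) * real k) \<le> exp (8 * ln 2) / real n ^ 4" .
  have "2 ^ k * (1 - p\<^sup>2/2) ^ (m - 2) \<le> sqrt (real n) * (exp (3 * p\<^sup>2 / 2) / real n ^ 3)"
    using t2k tpow b0 by (intro mult_mono) auto
  then have "2 ^ k * (1 - p\<^sup>2/2) ^ (m - 2) + exp (- (8 * ln 2) * real k)
      \<le> sqrt (real n) * (exp (3 * p\<^sup>2 / 2) / real n ^ 3) + exp (8 * ln 2) / real n ^ 4"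
    using texp by linarith
  then have "real n ^ 2 * (2 ^ k * (1 - p\<^sup>2/2) ^ (m - 2) + exp (- (8 * ln 2) * real k))
      \<le> real n ^ 2 * (sqrt (real n) * (exp (3 * p\<^sup>2 / 2) / real n ^ 3) + exp (8 * ln 2) / real n ^ 4)"
    by (intro mult_left_mono) auto
  also have "\<dots> = exp (3 * p\<^sup>2 / 2) * (sqrt (real n) / real n) + exp (8 * ln 2) * (1 / real n ^ 2)"
    using n0 by (simp add: field_simps power2_eq_square power3_eq_cube power4_eq_xxxx)
  finally show ?thesis .
qed

theorem lemma6:
  fixes p :: real and v :: nat
  assumes "0 < p" and "p < 1" and "v \<ge> 3"
  shows "(\<lambda>n. measure_pmf.prob (Gnp n p)
            {G. \<forall>x1\<in>{1..n}. \<forall>x2\<in>{1..n}. x1 \<noteq> x2 \<longrightarrow>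
                 (\<exists>K. K \<subseteq> common_nbhd G {1..nat \<lfloor>6 / p\<^sup>2 * ln (real n)\<rfloor>} x1 x2
                      \<and> card K = v \<and> is_clique G K)})
         \<longlonglongrightarrow> 1"
proof -
  have p: "0 < p" "p < 1" using assms by auto
  define C :: real where "C = 8 * ln 2"
  have C0: "C > 0" unfolding C_def by simp
  obtain K0 where K0: "\<And>k n S. k \<ge> K0 \<Longrightarrow> S \<subseteq> {1..n} \<Longrightarrow> card S = k \<Longrightarrow>
           measure_pmf.prob (Gnp n p) {G. noclq G S v} \<le> exp (- C * real k)"
    using clique_decay[OF p, of v] C0 by blast
  define U where "U n = exp (3 * p\<^sup>2 / 2) * (sqrt (real n) / real n) + exp (8 * ln 2) * (1 / real n ^ 2)" for n :: nat
  define Good where "Good n = {G. \<forall>x1\<in>{1..n}. \<forall>x2\<in>{1..n}. x1 \<noteq> x2 \<longrightarrow>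
                 (\<exists>K. K \<subseteq> common_nbhd G {1..nat \<lfloor>6 / p\<^sup>2 * ln (real n)\<rfloor>} x1 x2
                      \<and> card K = v \<and> is_clique G K)}" for n :: nat
  have ev: "eventually (\<lambda>n. 1 - U n \<le> measure_pmf.prob (Gnp n p) (Good n)) sequentially"
  proof (rule eventually_mono[OF eventually_facts[OF p(1), of K0]], elim conjE)
    fix n :: nat
    define m where "m = nat \<lfloor>6 / p\<^sup>2 * ln (real n)\<rfloor>"
    define k where "k = nat \<lfloor>ln (real n) / ln 4\<rfloor>"
    assume mn: "nat \<lfloor>6 / p\<^sup>2 * ln (real n)\<rfloor> \<le> n" and kK: "K0 \<le> nat \<lfloor>ln (real n) / ln 4\<rfloor>"
      and n1: "1 \<le> n"
    have mn': "m \<le> n" and kK': "K0 \<le> k" using mn kK unfolding m_def k_def by auto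
    define Pairs where "Pairs = {(x1, x2). x1 \<in> {1..n} \<and> x2 \<in> {1..n} \<and> x1 \<noteq> x2}"
    define Bad where "Bad q = {G. \<not> (\<exists>K. K \<subseteq> common_nbhd G {1..m} (fst q) (snd q) \<and> card K = v \<and> is_clique G K)}" for q
    define B where "B = 2 ^ k * (1 - p\<^sup>2/2) ^ (m - 2) + exp (- C * real k)"
    have finP: "finite Pairs"
    proof -
      have "Pairs \<subseteq> {1..n} \<times> {1..n}" unfolding Pairs_def by auto
      then show ?thesis by (rule finite_subset) auto
    qed
    have cardP: "card Pairs \<le> n ^ 2"
    proof -
      have "Pairs \<subseteq> {1..n} \<times> {1..n}" unfolding Pairs_def by auto
      then have "card Pairs \<le> card ({1..n} \<times> {1..n})" by (rule card_mono[rotated]) auto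
      then show ?thesis by (simp add: power2_eq_square)
    qed
    have compl: "- Good n = (\<Union>q\<in>Pairs. Bad q)"
    proof (rule set_eqI)
      fix G
      have "G \<in> - Good n \<longleftrightarrow> (\<exists>x1\<in>{1..n}. \<exists>x2\<in>{1..n}. x1 \<noteq> x2 \<and> G \<in> Bad (x1, x2))"
        unfolding Good_def Bad_def m_def fst_conv snd_conv by blast
      also have "\<dots> \<longleftrightarrow> (\<exists>q\<in>Pairs. G \<in> Bad q)"
        unfolding Pairs_def by blast
      finally show "G \<in> - Good n \<longleftrightarrow> G \<in> (\<Union>q\<in>Pairs. Bad q)" by blast
    qed
    have pb: "measure_pmf.prob (Gnp n p) (Bad q) \<le> B" if q: "q \<in> Pairs" for q
    proof -
      obtain x1 x2 where q': "q = (x1, x2)" "x1 \<in> {1..n}" "x2 \<in> {1..n}" "x1 \<noteq> x2"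
        using q unfolding Pairs_def by auto
      define Y where "Y = {1..m} - {x1, x2}"
      have "measure_pmf.prob (Gnp n p) (Bad q) \<le> 2 ^ k * (1 - p^2/2) ^ card Y + exp (- C * real k)"
        unfolding Bad_def q'(1) fst_conv snd_conv
      proof (rule pair_bound[OF p q'(2-4) mn' Y_def])
        fix R assume "R \<subseteq> {1..n}" "card R = k"
        then show "measure_pmf.prob (Gnp n p) {G. noclq G R v} \<le> exp (- C * real k)"
          by (rule K0[OF kK'])
      qed simp
      also have "(1 - p^2/2) ^ card Y \<le> (1 - p^2/2) ^ (m - 2)"
      proof (rule power_decreasing)
        have "card {1..m} - card {x1, x2} \<le> card Y" unfolding Y_def by (rule diff_card_le_card_Diff) auto
        moreover have "card {x1, x2} \<le> 2" by (simp add: card_insert_le_m1)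
        ultimately show "m - 2 \<le> card Y" by simp
        have "p^2 \<le> 1" using p by (simp add: power_le_one)
        then show "0 \<le> 1 - p^2/2" "1 - p^2/2 \<le> 1" by auto
      qed
      finally show ?thesis unfolding B_def by simp
    qed
    have "measure_pmf.prob (Gnp n p) (- Good n) \<le> (\<Sum>q\<in>Pairs. measure_pmf.prob (Gnp n p) (Bad q))"
      unfolding compl by (rule measure_pmf.finite_measure_subadditive_finite[OF finP]) auto
    also have "\<dots> \<le> (\<Sum>q\<in>Pairs. B)" by (intro sum_mono pb)
    also have "\<dots> = real (card Pairs) * B" by simp
    also have "\<dots> \<le> real n ^ 2 * B"
    proof (rule mult_right_mono)
      show "real (card Pairs) \<le> real n ^ 2" using cardP by (metis of_nat_le_iff of_nat_power)
      have "p^2 \<le> 1" using p by (simp add: power_le_one)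
      then have "0 \<le> 1 - p^2/2" by simp
      then show "0 \<le> B" unfolding B_def by (intro add_nonneg_nonneg mult_nonneg_nonneg zero_le_power) auto
    qed
    also have "\<dots> \<le> U n" unfolding B_def U_def C_def m_def k_def
      by (rule analytic_bound[OF p n1])
    finally have "measure_pmf.prob (Gnp n p) (- Good n) \<le> U n" .
    moreover have "measure_pmf.prob (Gnp n p) (- Good n) = 1 - measure_pmf.prob (Gnp n p) (Good n)"
      by (simp add: measure_pmf.prob_compl[symmetric] Compl_eq_Diff_UNIV)
    ultimately show "1 - U n \<le> measure_pmf.prob (Gnp n p) (Good n)" by linarith
  qed
  have "(\<lambda>n. 1 - U n) \<longlonglongrightarrow> 1 - 0"
    unfolding U_def by (intro tendsto_diff tendsto_const U_tendsto)
  then have lim1: "(\<lambda>n. 1 - U n) \<longlonglongrightarrow> 1" by simp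
  have "(\<lambda>n. measure_pmf.prob (Gnp n p) (Good n)) \<longlonglongrightarrow> 1"
    by (rule tendsto_sandwich[OF ev _ lim1 tendsto_const]) (simp add: measure_pmf.prob_le_1)
  then show ?thesis unfolding Good_def .
qed

end
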